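(* In Case II, the potentials $u_t$ satisfy, for all $\rho\in\mathbb R$, $t\in[0,T)$: (1) $(n-k)(T-t)<u_t'(\rho)<(n+k)(T-t)$; (2) $\lim_{t\to T}u_t(\rho)=0$; (3) there is $C>0$ with $C^{-1}\frac{e^{k\rho}}{(1+e^{k\rho})^2}(T-t)<u_t''(\rho)\leqslant C\frac{e^{k\rho}}{(1+e^{k\rho})^2}(T-t)$ and $\frac{|u_t'''(\rho)|}{u_t''(\rho)}\leqslant C$.
   Context: Setting: $X=X_{n,k}$ with $1\leqslant k\leqslant n-1$, coordinates $x\in\mathbb C^n\setminus\{0\}$ on $X\setminus(D_0\cup D_\infty)$, $\rho=\log\sum|x_i|^2$. $\omega(t)$ solves $\omega(t)=\omega_0-t\,\mathrm{Ric}(\omega(t))$, $\omega(0)=\omega_0$, with $\omega_0$ Calabi symmetric; $\omega(t)=\sqrt{-1}\partial\bar\partial u_t(\rho)$, $u_t'>0$, $u_t''>0$, $u_t(0)=0$, $\lim_{\rho\to-\infty}u_t'=a_t=a_0+(k-n)t$, $\lim_{\rho\to\infty}u_t'=b_t=b_0-(k+n)t$, $0<a_0<b_0$. Case II: $a_0(n+k)=b_0(n-k)$, $T=\frac{a_0}{n-k}$, so $a_t=(n-k)(T-t)$, $b_t=(n+k)(T-t)$. *)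

theory Defs
  imports "HOL-Analysis.Analysis"
begin

definition smooth_real_on :: "(real \<Rightarrow> real) \<Rightarrow> real set \<Rightarrow> bool" where
  "smooth_real_on f S \<longleftrightarrow> (\<forall>m::nat. \<forall>x\<in>S. ((deriv ^^ m) f) differentiable (at x))"

text \<open>Calabi's criterion: the Calabi-symmetric form sqrt(-1) dd-bar u(rho) on the
  complement of D_0, D_infinity in X_{n,k} extends to a smooth Kaehler metric on X_{n,k}
  in the class determined by (a,b): u is smooth with u' > 0, u'' > 0, and
  u(rho) - a rho = f(e^{k rho}) with f smooth near 0, f'(0) > 0 (near D_0), and
  u(rho) - b rho = g(e^{-k rho}) with g smooth near 0, g'(0) > 0 (near D_infinity).\<close>
definition calabi_kaehler_potential ::
    "nat \<Rightarrow> real \<Rightarrow> real \<Rightarrow> (real \<Rightarrow> real) \<Rightarrow> bool" where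
  "calabi_kaehler_potential k a b u \<longleftrightarrow>
     smooth_real_on u UNIV \<and>
     (\<forall>\<rho>. deriv u \<rho> > 0 \<and> deriv (deriv u) \<rho> > 0) \<and>
     (\<exists>f \<delta>. \<delta> > 0 \<and> smooth_real_on f {-\<delta><..<\<delta>} \<and> deriv f 0 > 0 \<and>
        (\<forall>\<rho>. exp (real k * \<rho>) < \<delta> \<longrightarrow> u \<rho> = a * \<rho> + f (exp (real k * \<rho>)))) \<and>
     (\<exists>g \<delta>. \<delta> > 0 \<and> smooth_real_on g {-\<delta><..<\<delta>} \<and> deriv g 0 > 0 \<and>
        (\<forall>\<rho>. exp (- real k * \<rho>) < \<delta> \<longrightarrow> u \<rho> = b * \<rho> + g (exp (- real k * \<rho>))))"

end

theory Submission
  imports Defs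
begin

lemma escape_right:
  fixes h hd q qd :: "real \<Rightarrow> real"
  assumes hD: "\<And>x. (h has_real_derivative hd x) (at x)"
    and qD: "\<And>x. (q has_real_derivative qd x) (at x)"
    and s1: "\<And>x. q x \<ge> 0 \<Longrightarrow> hd x \<ge> 0"
    and pos: "\<And>x. h x > L \<Longrightarrow> qd x > 0"
    and x1: "h x1 > L" and q1: "q x1 \<ge> 0"
  shows "\<forall>y\<ge>x1. q y \<ge> 0 \<and> h y \<ge> h x1"
proof -
  have cont: "continuous_on A h" for A
    using hD by (meson DERIV_isCont continuous_at_imp_continuous_on)
  have mono: "h a \<le> h b" if "a \<le> b" "\<And>y. a < y \<Longrightarrow> y < b \<Longrightarrow> q y \<ge> 0" for a b
    using that by (intro DERIV_nonneg_imp_increasing_open[where f=h]) (use hD s1 cont in blast)+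
  define Z where "Z = {y. y \<ge> x1 \<and> q y < 0}"
  have qnn: "\<forall>y\<ge>x1. q y \<ge> 0"
  proof (rule ccontr)
    assume "\<not> ?thesis"
    then have Zne: "Z \<noteq> {}" unfolding Z_def by force
    have bdd: "bdd_below Z" unfolding Z_def by (rule bdd_belowI[of _ x1]) auto
    define z where "z = Inf Z"
    have zge: "z \<ge> x1" unfolding z_def using Zne by (intro cInf_greatest) (auto simp: Z_def)
    have below: "q y \<ge> 0" if "x1 \<le> y" "y < z" for y
    proof (rule ccontr)
      assume "\<not> q y \<ge> 0" then have "y \<in> Z" using that by (auto simp: Z_def)
      then have "z \<le> y" unfolding z_def using bdd by (rule cInf_lower)
      with that show False by simp
    qed
    have "h z \<ge> h x1" using mono[OF zge] below by auto
    then have qdz: "qd z > 0" using pos x1 by fastforce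
    show False
    proof (cases "z \<in> Z")
      case True
      then have qz: "q z < 0" by (auto simp: Z_def)
      with q1 have "z \<noteq> x1" by auto
      with zge have zg: "z > x1" by simp
      obtain d where d: "d > 0" "\<forall>hh>0. hh < d \<longrightarrow> q (z - hh) < q z"
        using DERIV_pos_inc_left[OF qD qdz] by blast
      define hh where "hh = min (d/2) ((z - x1)/2)"
      have "hh > 0" "hh < d" using d zg by (auto simp: hh_def)
      then have "q (z - hh) < q z" using d by blast
      moreover have "x1 \<le> z - hh" using min.cobounded2[of "d/2" "(z-x1)/2"] zg
        unfolding hh_def by (simp add: min_def field_simps)
      moreover have "q (z - hh) \<ge> 0" using below[of "z - hh"] \<open>hh > 0\<close> calculation(2)
        by auto
      ultimately show False using qz by simp
    next
      case False
      then have qz: "q z \<ge> 0" using zge by (auto simp: Z_def)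
      obtain d where d: "d > 0" "\<forall>hh>0. hh < d \<longrightarrow> q z < q (z + hh)"
        using DERIV_pos_inc_right[OF qD qdz] by blast
      have "Inf Z < z + d" using d z_def by simp
      then obtain y where y: "y \<in> Z" "y < z + d" using cInf_less_iff[OF Zne bdd] by blast
      have "z \<le> y" unfolding z_def using y(1) bdd by (rule cInf_lower)
      with False y(1) have "y > z" by (cases "y = z") auto
      then have "q z < q y" using d(2)[rule_format, of "y - z"] y by simp
      with qz y(1) show False by (auto simp: Z_def)
    qed
  qed
  show ?thesis using qnn mono by auto
qed

lemma escape_left:
  fixes h hd q qd :: "real \<Rightarrow> real"
  assumes hD: "\<And>x. (h has_real_derivative hd x) (at x)"
    and qD: "\<And>x. (q has_real_derivative qd x) (at x)"
    and s2: "\<And>x. q x \<le> 0 \<Longrightarrow> hd x \<le> 0"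
    and pos: "\<And>x. h x > L \<Longrightarrow> qd x > 0"
    and x1: "h x1 > L" and q1: "q x1 \<le> 0"
  shows "\<forall>y\<le>x1. q y \<le> 0 \<and> h y \<ge> h x1"
proof -
  have hD': "((\<lambda>x. h (- x)) has_real_derivative (- hd (- x))) (at x)" for x
    using hD[of "-x"] DERIV_mirror by blast
  have qD': "((\<lambda>x. - q (- x)) has_real_derivative (qd (- x))) (at x)" for x
  proof -
    have "((\<lambda>x. q (- x)) has_real_derivative (- qd (- x))) (at x)"
      using qD[of "-x"] DERIV_mirror by blast
    from DERIV_minus[OF this] show ?thesis by simp
  qed
  have "\<forall>y\<ge>-x1. - q (- y) \<ge> 0 \<and> h (- y) \<ge> h (- (-x1))"
    by (rule escape_right[OF hD' qD', where L=L]) (use s2 pos x1 q1 in auto)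
  then show ?thesis
    by (metis minus_minus neg_le_iff_le neg_0_le_iff_le)
qed

lemma escape_lim:
  fixes h hd q qd :: "real \<Rightarrow> real"
  assumes hD: "\<And>x. (h has_real_derivative hd x) (at x)"
    and qD: "\<And>x. (q has_real_derivative qd x) (at x)"
    and s1: "\<And>x. q x \<ge> 0 \<Longrightarrow> hd x \<ge> 0"
    and s2: "\<And>x. q x \<le> 0 \<Longrightarrow> hd x \<le> 0"
    and pos: "\<And>x. h x > L \<Longrightarrow> qd x > 0"
    and lb: "(h \<longlongrightarrow> la) at_bot" "la \<le> L"
    and lt: "(h \<longlongrightarrow> lb) at_top" "lb \<le> L"
  shows "h x \<le> L"
proof (rule ccontr)
  assume "\<not> h x \<le> L" then have x1: "h x > L" by simp
  show False
  proof (cases "q x \<ge> 0")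
    case True
    have R: "\<forall>y\<ge>x. q y \<ge> 0 \<and> h y \<ge> h x" using escape_right[OF hD qD s1 pos x1 True] .
    have "\<forall>\<^sub>F y in at_top. h y \<ge> h x"
      using eventually_ge_at_top[of x] by (rule eventually_mono) (use R in auto)
    from tendsto_lowerbound[OF lt(1) this trivial_limit_at_top_linorder] lt(2) x1 show False by simp
  next
    case False
    have R: "\<forall>y\<le>x. q y \<le> 0 \<and> h y \<ge> h x" using escape_left[OF hD qD s2 pos x1] False by simp
    have "\<forall>\<^sub>F y in at_bot. h y \<ge> h x"
      using eventually_le_at_bot[of x] by (rule eventually_mono) (use R in auto)
    from tendsto_lowerbound[OF lb(1) this trivial_limit_at_bot_linorder] lb(2) x1 show False by simp
  qed
qed

lemma escape_zero:
  fixes h q qd :: "real \<Rightarrow> real"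
  assumes hD: "\<And>x. (h has_real_derivative q x) (at x)"
    and qD: "\<And>x. (q has_real_derivative qd x) (at x)"
    and pos: "\<And>x. h x > L \<Longrightarrow> qd x > 0"
    and lb: "(q \<longlongrightarrow> 0) at_bot"
    and lt: "(q \<longlongrightarrow> 0) at_top"
  shows "h x \<le> L"
proof (rule ccontr)
  assume "\<not> h x \<le> L" then have x1: "h x > L" by simp
  show False
  proof (cases "q x \<ge> 0")
    case True
    from escape_right[OF hD qD _ pos x1 True]
    have R: "\<forall>y\<ge>x. q y \<ge> 0 \<and> h y \<ge> h x" by auto
    have qinc: "q a < q b" if "x \<le> a" "a < b" for a b
    proof (rule DERIV_pos_imp_increasing[where f=q, OF that(2)])
      fix y assume "a \<le> y" "y \<le> b"
      then have "y \<ge> x" using that by linarith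
      then have "h y \<ge> h x" using R by blast
      then have "h y > L" using x1 by linarith
      then show "\<exists>yy. (q has_real_derivative yy) (at y) \<and> 0 < yy" using pos qD by blast
    qed
    have "\<forall>\<^sub>F y in at_top. q y \<ge> q (x+1)"
      using eventually_ge_at_top[of "x+1"] by (rule eventually_mono) (metis le_less qinc less_add_one less_imp_le order.trans)
    from tendsto_lowerbound[OF lt this trivial_limit_at_top_linorder]
    have "q (x+1) \<le> 0" .
    moreover have "q (x+1) > q x" by (rule qinc) auto
    ultimately show False using True by simp
  next
    case False
    from escape_left[OF hD qD _ pos x1] False
    have R: "\<forall>y\<le>x. q y \<le> 0 \<and> h y \<ge> h x" by auto
    have qinc: "q a < q b" if "b \<le> x" "a < b" for a b
    proof (rule DERIV_pos_imp_increasing[where f=q, OF that(2)])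
      fix y assume "a \<le> y" "y \<le> b"
      then have "y \<le> x" using that by linarith
      then have "h y \<ge> h x" using R by blast
      then have "h y > L" using x1 by linarith
      then show "\<exists>yy. (q has_real_derivative yy) (at y) \<and> 0 < yy" using pos qD by blast
    qed
    have "\<forall>\<^sub>F y in at_bot. q y \<le> q (x-1)"
      using eventually_le_at_bot[of "x-1"] by (rule eventually_mono) (smt (verit) qinc)
    from tendsto_upperbound[OF lb this trivial_limit_at_bot_linorder]
    have "q (x-1) \<ge> 0" .
    moreover have "q (x-1) < q x" by (rule qinc) auto
    ultimately show False using False by simp
  qed
qed

lemma bounded_lims:
  fixes h :: "real \<Rightarrow> real"
  assumes c: "continuous_on UNIV h" and l1: "(h \<longlongrightarrow> l1) at_bot" and l2: "(h \<longlongrightarrow> l2) at_top"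
  shows "\<exists>K. \<forall>x. \<bar>h x\<bar> \<le> K"
proof -
  have "\<forall>\<^sub>F x in at_bot. dist (h x) l1 < 1" using l1 by (rule tendstoD) simp
  then obtain N1 where N1: "\<And>x. x \<le> N1 \<Longrightarrow> dist (h x) l1 < 1"
    by (auto simp: eventually_at_bot_linorder)
  have "\<forall>\<^sub>F x in at_top. dist (h x) l2 < 1" using l2 by (rule tendstoD) simp
  then obtain N2 where N2: "\<And>x. x \<ge> N2 \<Longrightarrow> dist (h x) l2 < 1"
    by (auto simp: eventually_at_top_linorder)
  have "compact (h ` {N1..N2})"
    by (rule compact_continuous_image) (use c continuous_on_subset in auto)
  then obtain B where B: "\<And>y. y \<in> h ` {N1..N2} \<Longrightarrow> \<bar>y\<bar> \<le> B"
    using compact_imp_bounded bounded_real by metis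
  show ?thesis
  proof (intro exI allI)
    fix x
    show "\<bar>h x\<bar> \<le> \<bar>B\<bar> + \<bar>l1\<bar> + \<bar>l2\<bar> + 1"
    proof (cases "x \<le> N1")
      case True then show ?thesis using N1[of x] by (auto simp: dist_real_def)
    next
      case F1: False
      show ?thesis
      proof (cases "x \<ge> N2")
        case True then show ?thesis using N2[of x] by (auto simp: dist_real_def)
      next
        case False
        with F1 have "h x \<in> h ` {N1..N2}" by auto
        then show ?thesis using B by force
      qed
    qed
  qed
qed

lemma ln_bounded_lims:
  fixes h :: "real \<Rightarrow> real"
  assumes c: "continuous_on UNIV h" and pos: "\<And>x. h x > 0"
    and l1: "(h \<longlongrightarrow> l1) at_bot" "l1 > 0" and l2: "(h \<longlongrightarrow> l2) at_top" "l2 > 0"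
  shows "\<exists>K. \<forall>x. \<bar>ln (h x)\<bar> \<le> K"
proof (rule bounded_lims)
  show "continuous_on UNIV (\<lambda>x. ln (h x))"
    using c pos by (intro continuous_intros) (auto, metis less_irrefl)
  show "((\<lambda>x. ln (h x)) \<longlongrightarrow> ln l1) at_bot" using l1 by (intro tendsto_intros) auto
  show "((\<lambda>x. ln (h x)) \<longlongrightarrow> ln l2) at_top" using l2 by (intro tendsto_intros) auto
qed

lemma exp_lim_bot: "(k::real) > 0 \<Longrightarrow> ((\<lambda>x. exp (k * x)) \<longlongrightarrow> 0) at_bot"
  by (rule filterlim_compose[OF exp_at_bot])
     (rule filterlim_tendsto_pos_mult_at_bot[OF tendsto_const _ filterlim_ident])

lemma exp_lim_top: "(k::real) > 0 \<Longrightarrow> ((\<lambda>x. exp (- k * x)) \<longlongrightarrow> 0) at_top"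
  by (rule filterlim_compose[OF exp_at_bot])
     (rule filterlim_tendsto_neg_mult_at_bot[OF tendsto_const _ filterlim_ident], simp)

lemma gg_sym: "exp (- (k::real) * x) / (1 + exp (- k * x))^2 = exp (k * x) / (1 + exp (k * x))^2"
proof -
  have e: "exp (- k * x) = 1 / exp (k * x)" by (simp add: exp_minus inverse_eq_divide)
  have p: "exp (k * x) > 0" by simp
  show ?thesis unfolding e using p by (simp add: field_simps power2_eq_square)
qed

lemma gg_bounds: "0 < exp ((k::real) * x) / (1 + exp (k * x))^2" "exp (k * x) / (1 + exp (k * x))^2 \<le> (1::real)"
proof -
  have p: "exp (k * x) > 0" by simp
  have "1 + exp (k * x) > 0" by (smt (verit) exp_gt_zero)
  then have q: "(1 + exp (k * x))^2 > 0" by simp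
  then show "0 < exp (k * x) / (1 + exp (k * x))^2" using p by (metis divide_pos_pos)
  have "exp (k * x) \<le> (1 + exp (k * x))^2" using p by (simp add: power2_eq_square algebra_simps)
  then show "exp (k * x) / (1 + exp (k * x))^2 \<le> 1" using q by (simp add: divide_le_eq)
qed

lemma strict_between:
  fixes f f' :: "real \<Rightarrow> real"
  assumes D: "\<And>x. (f has_real_derivative f' x) (at x)" and pos: "\<And>x. f' x > 0"
    and l1: "(f \<longlongrightarrow> A) at_bot" and l2: "(f \<longlongrightarrow> B) at_top"
  shows "A < f x \<and> f x < B"
proof -
  have inc: "f a < f b" if "a < b" for a b
    using that D pos by (intro DERIV_pos_imp_increasing[where f=f]) blast+
  have "\<forall>\<^sub>F y in at_top. f (x+1) \<le> f y"
    using eventually_ge_at_top[of "x+1"] by (rule eventually_mono) (metis inc le_less)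
  then have "f (x+1) \<le> B" using tendsto_lowerbound[OF l2 _ trivial_limit_at_top_linorder] by blast
  moreover have "\<forall>\<^sub>F y in at_bot. f y \<le> f (x-1)"
    using eventually_le_at_bot[of "x-1"] by (rule eventually_mono) (metis inc le_less)
  then have "A \<le> f (x-1)" using tendsto_upperbound[OF l1 _ trivial_limit_at_bot_linorder] by blast
  moreover have "f x < f (x+1)" "f (x-1) < f x" by (auto intro: inc)
  ultimately show ?thesis by simp
qed

lemma mvt_bound:
  fixes f f' :: "real \<Rightarrow> real"
  assumes D: "\<And>x. (f has_real_derivative f' x) (at x)" and b: "\<And>x. \<bar>f' x\<bar> \<le> B" and f0: "f 0 = 0"
  shows "\<bar>f x\<bar> \<le> B * \<bar>x\<bar>"
proof (cases "x = 0")
  case True then show ?thesis using f0 by simp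
next
  case False
  show ?thesis
  proof (cases "x > 0")
    case True
    obtain z where "f x - f 0 = (x - 0) * f' z" using MVT2[OF True, of f f'] D by blast
    then have "f x = x * f' z" using f0 by simp
    then show ?thesis using mult_right_mono[OF b[of z] abs_ge_zero[of x]] by (simp add: abs_mult mult.commute)
  next
    case False
    with \<open>x \<noteq> 0\<close> have "x < 0" by simp
    obtain z where "f 0 - f x = (0 - x) * f' z" using MVT2[OF \<open>x < 0\<close>, of f f'] D by blast
    then have "f x = x * f' z" using f0 by simp
    then show ?thesis using mult_right_mono[OF b[of z] abs_ge_zero[of x]] by (simp add: abs_mult mult.commute)
  qed
qed

lemma est_A:
  fixes U V P1 P2 q1 q2 :: "real \<Rightarrow> real" and t s T N m c KL \<alpha> \<beta> :: real
  assumes tp: "t > 0" and sp: "s > 0" and Ts: "T = t + s"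
    and DU1: "\<And>x. (U has_real_derivative P1 x) (at x)"
    and DU2: "\<And>x. (P1 has_real_derivative P2 x) (at x)"
    and Du1: "\<And>x. (V has_real_derivative q1 x) (at x)"
    and Du2: "\<And>x. (q1 has_real_derivative q2 x) (at x)"
    and P1b: "\<And>x. \<alpha> * s < P1 x \<and> P1 x < \<beta> * s"
    and P2p: "\<And>x. P2 x > 0" and q2p: "\<And>x. q2 x > 0"
    and ap: "\<alpha> > 0" and mN: "m = N - 1" "m \<ge> 0"
    and eqn: "\<And>x. t * (ln (P2 x) + m * ln (P1 x)) = U x - V x + t * N * x - c"
    and KL: "\<And>x. \<bar>ln (q2 x) + V x / T - N * x\<bar> \<le> KL"
    and l1: "(P1 \<longlongrightarrow> \<alpha> * s) at_bot" "(q1 \<longlongrightarrow> \<alpha> * T) at_bot"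
    and l2: "(P1 \<longlongrightarrow> \<beta> * s) at_top" "(q1 \<longlongrightarrow> \<beta> * T) at_top"
  shows "\<bar>ln (P2 x) - ln s - (N * x - V x / T)\<bar> \<le> KL + \<bar>ln T\<bar> + m * (ln \<beta> - ln \<alpha>)"
proof -
  have Tp: "T > 0" using tp sp Ts by simp
  have bp: "\<beta> > 0" using P1b[of 0] ap sp
    by (smt (verit, best) mult_le_0_iff)
  define E where "E x = (U x - (s / T) * V x - c) / t - N * ln s" for x
  define E1 where "E1 x = (P1 x - (s / T) * q1 x) / t" for x
  define E2 where "E2 x = (P2 x - (s / T) * q2 x) / t" for x
  have DE: "(E has_real_derivative E1 x) (at x)" for x
    unfolding E_def[abs_def] E1_def using DU1[of x] Du1[of x] tp Tp
    by (auto intro!: derivative_eq_intros simp: field_simps)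
  have DE1: "(E1 has_real_derivative E2 x) (at x)" for x
    unfolding E1_def[abs_def] E2_def using DU2[of x] Du2[of x] tp Tp
    by (auto intro!: derivative_eq_intros simp: field_simps)
  have E1b: "(E1 \<longlongrightarrow> 0) at_bot"
  proof -
    have "(E1 \<longlongrightarrow> (\<alpha> * s - (s / T) * (\<alpha> * T)) / t) at_bot"
      unfolding E1_def[abs_def] using tp by (intro tendsto_intros l1) auto
    then show ?thesis using Tp by simp
  qed
  have E1t: "(E1 \<longlongrightarrow> 0) at_top"
  proof -
    have "(E1 \<longlongrightarrow> (\<beta> * s - (s / T) * (\<beta> * T)) / t) at_top"
      unfolding E1_def[abs_def] using tp by (intro tendsto_intros l2) auto
    then show ?thesis using Tp by simp
  qed
  have key: "ln (P2 x) - ln ((s / T) * q2 x)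
      = E x - (ln (q2 x) + V x / T - N * x) + ln T - m * (ln (P1 x) - ln s)" for x
  proof -
    have P1p: "P1 x > 0" using P1b[of x] ap sp by (smt (verit) mult_pos_pos)
    have "ln (P2 x) = E x + N * ln s + N * x - V x / T - m * ln (P1 x)"
    proof -
      have e1: "t * E x = U x - (s/T) * V x - c - t * N * ln s"
        unfolding E_def using tp by (simp add: field_simps)
      have e2: "(s/T) * V x + (t/T) * V x = V x"
      proof -
        have "(s/T) * V x + (t/T) * V x = ((s+t)/T) * V x" by (simp add: add_divide_distrib algebra_simps)
        also have "(s+t)/T = 1" using Tp Ts by simp
        finally show ?thesis by simp
      qed
      have "t * (E x + N * ln s + N * x - V x / T) = t * E x + t * N * ln s + t * N * x - (t/T) * V x"
        by (simp add: algebra_simps)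
      also have "\<dots> = U x - ((s/T) * V x + (t/T) * V x) - c + t * N * x"
        unfolding e1 by (simp add: algebra_simps)
      also have "\<dots> = U x - V x + t * N * x - c" unfolding e2 by simp
      also have "\<dots> = t * (ln (P2 x) + m * ln (P1 x))" using eqn by simp
      finally have "t * (E x + N * ln s + N * x - V x / T) = t * (ln (P2 x) + m * ln (P1 x))" .
      then have "E x + N * ln s + N * x - V x / T = ln (P2 x) + m * ln (P1 x)" using tp by simp
      then show ?thesis by linarith
    qed
    moreover have "ln ((s / T) * q2 x) = ln s - ln T + ln (q2 x)"
      using sp Tp q2p[of x] by (simp add: ln_mult ln_div)
    moreover have hN: "N = m + 1" using mN by simp
    ultimately show ?thesis by (simp add: hN algebra_simps)
  qed
  define M where "M = KL - ln T + m * ln \<beta>"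
  define M' where "M' = - KL - ln T + m * ln \<alpha>"
  have lnP1: "ln \<alpha> + ln s < ln (P1 x) \<and> ln (P1 x) < ln \<beta> + ln s" for x
  proof -
    have as: "\<alpha> * s > 0" using ap sp by simp
    then have P1p: "P1 x > 0" using P1b[of x] by linarith
    have "ln (\<alpha> * s) < ln (P1 x)" "ln (P1 x) < ln (\<beta> * s)"
      using P1b[of x] as P1p by (auto simp: ln_less_cancel_iff)
    then show ?thesis using ap bp sp by (simp add: ln_mult)
  qed
  have up: "E x \<le> M"
  proof (rule escape_zero[OF DE DE1])
    fix x assume "E x > M"
    have "m * (ln (P1 x) - ln s) \<le> m * ln \<beta>"
      using lnP1[of x] mN by (intro mult_left_mono) auto
    then have "ln (P2 x) - ln ((s / T) * q2 x) > 0"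
      unfolding key using \<open>E x > M\<close> KL[of x] unfolding M_def by linarith
    then have lt: "ln ((s / T) * q2 x) < ln (P2 x)" by simp
    have "(s / T) * q2 x > 0" using q2p[of x] sp Tp by simp
    then have "P2 x > (s / T) * q2 x" using lt P2p[of x] ln_less_cancel_iff by blast
    then show "E2 x > 0" unfolding E2_def using tp by simp
  qed (use E1b E1t in auto)
  have lo: "E x \<ge> M'"
  proof -
    have DE': "((\<lambda>x. - E x) has_real_derivative - E1 x) (at x)" for x using DE[of x] by (rule DERIV_minus)
    have DE1': "((\<lambda>x. - E1 x) has_real_derivative - E2 x) (at x)" for x using DE1[of x] by (rule DERIV_minus)
    have "- E x \<le> - M'"
    proof (rule escape_zero[OF DE' DE1'])
      fix x assume "- E x > - M'"
      have "m * (ln (P1 x) - ln s) \<ge> m * ln \<alpha>"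
        using lnP1[of x] mN by (intro mult_left_mono) auto
      then have "ln (P2 x) - ln ((s / T) * q2 x) < 0"
        unfolding key using \<open>- E x > - M'\<close> KL[of x] unfolding M'_def by linarith
      then have lt: "ln (P2 x) < ln ((s / T) * q2 x)" by simp
      have "(s / T) * q2 x > 0" using q2p[of x] sp Tp by simp
      then have "P2 x < (s / T) * q2 x" using lt P2p[of x] ln_less_cancel_iff by blast
      then show "- E2 x > 0" unfolding E2_def using tp by (simp add: divide_less_0_iff)
    qed (use E1b E1t tendsto_minus[of E1 0] in auto)
    then show ?thesis by simp
  qed
  have id: "ln (P2 x) - ln s - (N * x - V x / T) = E x - m * (ln (P1 x) - ln s)"
  proof -
    have "ln ((s / T) * q2 x) = ln s - ln T + ln (q2 x)"
      using sp Tp q2p[of x] by (simp add: ln_mult ln_div)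
    then show ?thesis using key[of x] by (simp add: algebra_simps)
  qed
  have m1: "m * (ln (P1 x) - ln s) \<le> m * ln \<beta>" "m * ln \<alpha> \<le> m * (ln (P1 x) - ln s)"
    using lnP1[of x] mN by (intro mult_left_mono; auto)+
  show ?thesis unfolding id using up lo m1 unfolding M_def M'_def
    by (simp add: abs_le_iff algebra_simps)
qed

lemma est_B:
  fixes Pa Pb Pc Qa Qb Qc :: "real \<Rightarrow> real" and t N m K0 K1 la lb :: real
  assumes tp: "t > 0"
    and DP1: "\<And>x. (Pa has_real_derivative Pb x) (at x)"
    and DP2: "\<And>x. (Pb has_real_derivative Pc x) (at x)"
    and Dq1: "\<And>x. (Qa has_real_derivative Qb x) (at x)"
    and Dq2: "\<And>x. (Qb has_real_derivative Qc x) (at x)"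
    and P1p: "\<And>x. Pa x > 0" and P2p: "\<And>x. Pb x > 0" and q2p: "\<And>x. Qb x > 0"
    and eqd: "\<And>x. Pa x - Qa x = t * (- N + m * (Pb x / Pa x) + Pc x / Pb x)"
    and K1: "\<And>x. Pb x / Pa x \<le> K1" and K0: "\<And>x. \<bar>Qc x / Qb x\<bar> \<le> K0"
    and mN: "m \<ge> 0" "N \<ge> 0"
    and l1: "((\<lambda>x. Pa x - Qa x) \<longlongrightarrow> la) at_bot" "\<bar>la\<bar> \<le> 2 * N * t"
    and l2: "((\<lambda>x. Pa x - Qa x) \<longlongrightarrow> lb) at_top" "\<bar>lb\<bar> \<le> 2 * N * t"
  shows "\<bar>Pc x / Pb x\<bar> \<le> K0 + 2 * m * K1 + 3 * N"
proof -
  define C where "C = K0 + m * K1 + 2 * N"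
  have K1p: "K1 \<ge> 0" using K1[of 0] P1p[of 0] P2p[of 0] by (smt (verit) divide_pos_pos)
  have K0p: "K0 \<ge> 0" using K0[of 0] abs_ge_zero order.trans by blast
  have mK: "m * (Pb y / Pa y) \<le> m * K1" "m * (Pb y / Pa y) \<ge> 0" for y
    using mult_left_mono[OF K1[of y] mN(1)] mN P1p[of y] P2p[of y] by auto
  have r: "Pc y / Pb y = (Pa y - Qa y) / t + N - m * (Pb y / Pa y)" for y
    using eqd[of y] tp by (simp add: field_simps)
  have hD: "((\<lambda>x. Pa x - Qa x) has_real_derivative (Pb x - Qb x)) (at x)" for x
    using DP1[of x] Dq1[of x] by (rule DERIV_diff)
  have qD: "((\<lambda>x. ln (Pb x) - ln (Qb x)) has_real_derivative (Pc x / Pb x - Qc x / Qb x)) (at x)" for x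
    using DP2[of x] Dq2[of x] P2p[of x] q2p[of x]
    by (auto intro!: derivative_eq_intros simp: field_simps)
  have s1: "Pb x - Qb x \<ge> 0" if "ln (Pb x) - ln (Qb x) \<ge> 0" for x
    using that P2p[of x] q2p[of x] by simp
  have s2: "Pb x - Qb x \<le> 0" if "ln (Pb x) - ln (Qb x) \<le> 0" for x
    using that P2p[of x] q2p[of x] by simp
  have up: "Pa x - Qa x \<le> C * t" for x
  proof (rule escape_lim[OF hD qD s1 s2])
    fix x assume a: "Pa x - Qa x > C * t"
    then have "(Pa x - Qa x) / t > C" using tp by (simp add: field_simps)
    then have "Pc x / Pb x > K0" using r[of x] mK[of x] unfolding C_def using mN by linarith
    moreover have "Qc x / Qb x \<le> K0" using K0[of x] abs_le_iff by blast
    ultimately show "Pc x / Pb x - Qc x / Qb x > 0" by simp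
  next
    show "la \<le> C * t" using l1(2) tp K0p K1p mN unfolding C_def
      by (smt (verit) mult_nonneg_nonneg distrib_right)
    show "lb \<le> C * t" using l2(2) tp K0p K1p mN unfolding C_def
      by (smt (verit) mult_nonneg_nonneg distrib_right)
  qed (use l1 l2 in auto)
  have lo: "- (Pa x - Qa x) \<le> C * t" for x
  proof (rule escape_lim[where h="\<lambda>x. - (Pa x - Qa x)" and hd="\<lambda>x. - (Pb x - Qb x)"
        and q="\<lambda>x. - (ln (Pb x) - ln (Qb x))" and qd="\<lambda>x. - (Pc x / Pb x - Qc x / Qb x)"])
    show "((\<lambda>x. - (Pa x - Qa x)) has_real_derivative - (Pb x - Qb x)) (at x)" for x
      using hD[of x] by (rule DERIV_minus)
    show "((\<lambda>x. - (ln (Pb x) - ln (Qb x))) has_real_derivative - (Pc x / Pb x - Qc x / Qb x)) (at x)" for x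
      using qD[of x] by (rule DERIV_minus)
    show "0 \<le> - (Pb x - Qb x)" if "0 \<le> - (ln (Pb x) - ln (Qb x))" for x using s2[of x] that by simp
    show "- (Pb x - Qb x) \<le> 0" if "- (ln (Pb x) - ln (Qb x)) \<le> 0" for x using s1[of x] that by simp
    fix x assume a: "- (Pa x - Qa x) > C * t"
    then have "(Pa x - Qa x) / t < - C" using tp by (simp add: field_simps)
    then have "Pc x / Pb x < - K0" using r[of x] mK[of x] unfolding C_def using mN K1p by linarith
    moreover have "Qc x / Qb x \<ge> - K0" using K0[of x] abs_le_iff by (metis minus_le_iff)
    ultimately show "- (Pc x / Pb x - Qc x / Qb x) > 0" by simp
  next
    show "((\<lambda>x. - (Pa x - Qa x)) \<longlongrightarrow> - la) at_bot" using l1(1) by (rule tendsto_minus)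
    show "((\<lambda>x. - (Pa x - Qa x)) \<longlongrightarrow> - lb) at_top" using l2(1) by (rule tendsto_minus)
    show "- la \<le> C * t" using l1(2) tp K0p K1p mN unfolding C_def
      by (smt (verit) mult_nonneg_nonneg distrib_right)
    show "- lb \<le> C * t" using l2(2) tp K0p K1p mN unfolding C_def
      by (smt (verit) mult_nonneg_nonneg distrib_right)
  qed
  have w1: "(Pa x - Qa x) / t \<le> C" using up[of x] tp by (simp add: divide_le_eq)
  have w2: "- C \<le> (Pa x - Qa x) / t" using lo[of x] tp by (simp add: le_divide_eq)
  show ?thesis unfolding abs_le_iff using w1 w2 r[of x] mK[of x] mN unfolding C_def by linarith
qed

lemma smooth_D:
  assumes "smooth_real_on f S" "x \<in> S"
  shows "(f has_real_derivative deriv f x) (at x)"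
    "(deriv f has_real_derivative deriv (deriv f) x) (at x)"
    "(deriv (deriv f) has_real_derivative deriv (deriv (deriv f)) x) (at x)"
    "(deriv (deriv (deriv f)) has_real_derivative deriv (deriv (deriv (deriv f))) x) (at x)"
proof -
  have d: "((deriv ^^ m) f) differentiable (at x)" for m
    using assms unfolding smooth_real_on_def by blast
  show "(f has_real_derivative deriv f x) (at x)"
    using d[of 0] by (simp add: DERIV_deriv_iff_real_differentiable)
  show "(deriv f has_real_derivative deriv (deriv f) x) (at x)"
    using d[of 1] by (simp add: DERIV_deriv_iff_real_differentiable)
  show "(deriv (deriv f) has_real_derivative deriv (deriv (deriv f)) x) (at x)"
    using d[of 2] by (simp add: DERIV_deriv_iff_real_differentiable numeral_2_eq_2)
  show "(deriv (deriv (deriv f)) has_real_derivative deriv (deriv (deriv (deriv f))) x) (at x)"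
    using d[of 3] by (simp add: DERIV_deriv_iff_real_differentiable numeral_3_eq_3)
qed

lemma deriv_open_eq:
  assumes "open S" "x \<in> S" "\<And>y. y \<in> S \<Longrightarrow> h y = H y" "(H has_real_derivative D) (at x)"
  shows "deriv h x = D"
proof -
  have "(h has_real_derivative D) (at x)"
    by (rule has_field_derivative_transform_within_open[OF assms(4) assms(1,2)]) (use assms(3) in auto)
  then show ?thesis by (rule DERIV_imp_deriv)
qed

lemma calabi_end_derivs:
  fixes u f :: "real \<Rightarrow> real" and a \<kappa> \<delta> :: real
  assumes sf: "smooth_real_on f {-\<delta><..<\<delta>}"
    and eq: "\<And>\<rho>. exp (\<kappa> * \<rho>) < \<delta> \<Longrightarrow> u \<rho> = a * \<rho> + f (exp (\<kappa> * \<rho>))"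
  defines "f1 \<equiv> deriv f" and "f2 \<equiv> deriv (deriv f)" and "f3 \<equiv> deriv (deriv (deriv f))"
  assumes r: "exp (\<kappa> * \<rho>) < \<delta>"
  shows "deriv u \<rho> = a + \<kappa> * exp (\<kappa> * \<rho>) * f1 (exp (\<kappa> * \<rho>))"
    "deriv (deriv u) \<rho> = \<kappa>^2 * (exp (\<kappa> * \<rho>) * f1 (exp (\<kappa> * \<rho>)) + exp (\<kappa> * \<rho>)^2 * f2 (exp (\<kappa> * \<rho>)))"
    "deriv (deriv (deriv u)) \<rho> = \<kappa>^3 * (exp (\<kappa> * \<rho>) * f1 (exp (\<kappa> * \<rho>))
        + 3 * exp (\<kappa> * \<rho>)^2 * f2 (exp (\<kappa> * \<rho>)) + exp (\<kappa> * \<rho>)^3 * f3 (exp (\<kappa> * \<rho>)))"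
proof -
  define S where "S = {y. exp (\<kappa> * y) < \<delta>}"
  have oS: "open S" unfolding S_def by (intro open_Collect_less continuous_intros)
  have inS: "exp (\<kappa> * y) \<in> {-\<delta><..<\<delta>}" if "y \<in> S" for y
    using that unfolding S_def by auto (smt (verit) exp_gt_zero)
  have e: "((\<lambda>y. exp (\<kappa> * y)) has_real_derivative exp (\<kappa> * y) * \<kappa>) (at y)" for y
    by (auto intro!: derivative_eq_intros)
  note D = smooth_D[OF sf inS]
  have c0: "((\<lambda>y. f (exp (\<kappa> * y))) has_real_derivative f1 (exp (\<kappa> * y)) * (exp (\<kappa> * y) * \<kappa>)) (at y)"
    if "y \<in> S" for y
    unfolding f1_def by (rule DERIV_chain2[OF D(1)[OF that] e])
  have c1: "((\<lambda>y. f1 (exp (\<kappa> * y))) has_real_derivative f2 (exp (\<kappa> * y)) * (exp (\<kappa> * y) * \<kappa>)) (at y)"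
    if "y \<in> S" for y
    unfolding f1_def f2_def by (rule DERIV_chain2[OF D(2)[OF that] e])
  have c2: "((\<lambda>y. f2 (exp (\<kappa> * y))) has_real_derivative f3 (exp (\<kappa> * y)) * (exp (\<kappa> * y) * \<kappa>)) (at y)"
    if "y \<in> S" for y
    unfolding f3_def f2_def by (rule DERIV_chain2[OF D(3)[OF that] e])
  have d1: "deriv u y = a + \<kappa> * exp (\<kappa> * y) * f1 (exp (\<kappa> * y))" if "y \<in> S" for y
  proof (rule deriv_open_eq[OF oS that])
    show "u z = a * z + f (exp (\<kappa> * z))" if "z \<in> S" for z using eq that by (auto simp: S_def)
    show "((\<lambda>z. a * z + f (exp (\<kappa> * z))) has_real_derivative a + \<kappa> * exp (\<kappa> * y) * f1 (exp (\<kappa> * y))) (at y)"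
      using c0[OF that] by (auto intro!: derivative_eq_intros)
  qed
  have d2: "deriv (deriv u) y = \<kappa>^2 * (exp (\<kappa> * y) * f1 (exp (\<kappa> * y)) + exp (\<kappa> * y)^2 * f2 (exp (\<kappa> * y)))"
    if "y \<in> S" for y
  proof (rule deriv_open_eq[OF oS that])
    show "deriv u z = a + \<kappa> * exp (\<kappa> * z) * f1 (exp (\<kappa> * z))" if "z \<in> S" for z using d1 that .
    show "((\<lambda>z. a + \<kappa> * exp (\<kappa> * z) * f1 (exp (\<kappa> * z))) has_real_derivative \<kappa>^2 * (exp (\<kappa> * y) * f1 (exp (\<kappa> * y)) + exp (\<kappa> * y)^2 * f2 (exp (\<kappa> * y)))) (at y)"
      using c1[OF that] by (auto intro!: derivative_eq_intros simp: power2_eq_square algebra_simps)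
  qed
  have d3: "deriv (deriv (deriv u)) y = \<kappa>^3 * (exp (\<kappa> * y) * f1 (exp (\<kappa> * y))
        + 3 * exp (\<kappa> * y)^2 * f2 (exp (\<kappa> * y)) + exp (\<kappa> * y)^3 * f3 (exp (\<kappa> * y)))"
    if "y \<in> S" for y
  proof (rule deriv_open_eq[OF oS that])
    show "deriv (deriv u) z = \<kappa>^2 * (exp (\<kappa> * z) * f1 (exp (\<kappa> * z)) + exp (\<kappa> * z)^2 * f2 (exp (\<kappa> * z)))"
      if "z \<in> S" for z using d2 that .
    show "((\<lambda>z. \<kappa>^2 * (exp (\<kappa> * z) * f1 (exp (\<kappa> * z)) + exp (\<kappa> * z)^2 * f2 (exp (\<kappa> * z)))) has_real_derivative
       \<kappa>^3 * (exp (\<kappa> * y) * f1 (exp (\<kappa> * y))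
        + 3 * exp (\<kappa> * y)^2 * f2 (exp (\<kappa> * y)) + exp (\<kappa> * y)^3 * f3 (exp (\<kappa> * y)))) (at y)"
      using c1[OF that] c2[OF that] by (auto intro!: derivative_eq_intros simp: power2_eq_square power3_eq_cube algebra_simps)
  qed
  have "\<rho> \<in> S" using r by (simp add: S_def)
  then show "deriv u \<rho> = a + \<kappa> * exp (\<kappa> * \<rho>) * f1 (exp (\<kappa> * \<rho>))"
    "deriv (deriv u) \<rho> = \<kappa>^2 * (exp (\<kappa> * \<rho>) * f1 (exp (\<kappa> * \<rho>)) + exp (\<kappa> * \<rho>)^2 * f2 (exp (\<kappa> * \<rho>)))"
    "deriv (deriv (deriv u)) \<rho> = \<kappa>^3 * (exp (\<kappa> * \<rho>) * f1 (exp (\<kappa> * \<rho>))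
        + 3 * exp (\<kappa> * \<rho>)^2 * f2 (exp (\<kappa> * \<rho>)) + exp (\<kappa> * \<rho>)^3 * f3 (exp (\<kappa> * \<rho>)))"
    using d1 d2 d3 by auto
qed

lemma calabi_end_lims:
  fixes u f :: "real \<Rightarrow> real" and a \<kappa> \<delta> N T :: real and F :: "real filter"
  assumes sf: "smooth_real_on f {-\<delta><..<\<delta>}" and dpos: "\<delta> > 0" and f1pos: "deriv f 0 > 0"
    and kap: "\<kappa> \<noteq> 0"
    and eq: "\<And>\<rho>. exp (\<kappa> * \<rho>) < \<delta> \<Longrightarrow> u \<rho> = a * \<rho> + f (exp (\<kappa> * \<rho>))"
    and lim: "((\<lambda>\<rho>. exp (\<kappa> * \<rho>)) \<longlongrightarrow> 0) F"
    and NT: "N - a / T = \<kappa>" "T \<noteq> 0"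
  shows "((\<lambda>\<rho>. deriv (deriv u) \<rho> / (exp (\<kappa> * \<rho>) / (1 + exp (\<kappa> * \<rho>))^2)) \<longlongrightarrow> \<kappa>^2 * deriv f 0) F"
    "((\<lambda>\<rho>. deriv (deriv (deriv u)) \<rho> / deriv (deriv u) \<rho>) \<longlongrightarrow> \<kappa>) F"
    "((\<lambda>\<rho>. exp (N * \<rho> - u \<rho> / T) / (exp (\<kappa> * \<rho>) / (1 + exp (\<kappa> * \<rho>))^2)) \<longlongrightarrow> exp (- f 0 / T)) F"
proof -
  have ev: "\<forall>\<^sub>F \<rho> in F. exp (\<kappa> * \<rho>) < \<delta>"
    using lim dpos by (rule order_tendstoD)
  have z: "0 \<in> {-\<delta><..<\<delta>}" using dpos by auto
  note D = smooth_D[OF sf z]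
  have c0: "((\<lambda>\<rho>. f (exp (\<kappa> * \<rho>))) \<longlongrightarrow> f 0) F"
    by (rule isCont_tendsto_compose[OF DERIV_isCont[OF D(1)] lim])
  have c1: "((\<lambda>\<rho>. deriv f (exp (\<kappa> * \<rho>))) \<longlongrightarrow> deriv f 0) F"
    by (rule isCont_tendsto_compose[OF DERIV_isCont[OF D(2)] lim])
  have c2: "((\<lambda>\<rho>. deriv (deriv f) (exp (\<kappa> * \<rho>))) \<longlongrightarrow> deriv (deriv f) 0) F"
    by (rule isCont_tendsto_compose[OF DERIV_isCont[OF D(3)] lim])
  have c3: "((\<lambda>\<rho>. deriv (deriv (deriv f)) (exp (\<kappa> * \<rho>))) \<longlongrightarrow> deriv (deriv (deriv f)) 0) F"
    by (rule isCont_tendsto_compose[OF DERIV_isCont[OF D(4)] lim])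
  note CD = calabi_end_derivs[OF sf eq]
  show "((\<lambda>\<rho>. deriv (deriv u) \<rho> / (exp (\<kappa> * \<rho>) / (1 + exp (\<kappa> * \<rho>))^2)) \<longlongrightarrow> \<kappa>^2 * deriv f 0) F"
  proof (rule Lim_transform_eventually)
    show "((\<lambda>\<rho>. \<kappa>^2 * (deriv f (exp (\<kappa> * \<rho>)) + exp (\<kappa> * \<rho>) * deriv (deriv f) (exp (\<kappa> * \<rho>)))
              * (1 + exp (\<kappa> * \<rho>))^2) \<longlongrightarrow> \<kappa>^2 * deriv f 0) F"
    proof -
      have "isCont (\<lambda>x. \<kappa>^2 * (deriv f x + x * deriv (deriv f) x) * (1 + x)^2) 0"
        using DERIV_isCont[OF D(2)] DERIV_isCont[OF D(3)] by (intro continuous_intros) auto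
      from isCont_tendsto_compose[OF this lim] show ?thesis by simp
    qed
    show "\<forall>\<^sub>F \<rho> in F. \<kappa>^2 * (deriv f (exp (\<kappa> * \<rho>)) + exp (\<kappa> * \<rho>) * deriv (deriv f) (exp (\<kappa> * \<rho>)))
              * (1 + exp (\<kappa> * \<rho>))^2 = deriv (deriv u) \<rho> / (exp (\<kappa> * \<rho>) / (1 + exp (\<kappa> * \<rho>))^2)"
      using ev
    proof (rule eventually_mono)
      fix \<rho> assume r: "exp (\<kappa> * \<rho>) < \<delta>"
      define s where "s = exp (\<kappa> * \<rho>)"
      have sp: "s > 0" by (simp add: s_def)
      have d2: "deriv (deriv u) \<rho> = \<kappa>^2 * (s * deriv f s + s^2 * deriv (deriv f) s)"
        using calabi_end_derivs(2)[OF sf eq r] by (simp add: s_def)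
      have "(1 + s)^2 > 0" using sp by simp
      then show "\<kappa>^2 * (deriv f (exp (\<kappa> * \<rho>)) + exp (\<kappa> * \<rho>) * deriv (deriv f) (exp (\<kappa> * \<rho>)))
              * (1 + exp (\<kappa> * \<rho>))^2 = deriv (deriv u) \<rho> / (exp (\<kappa> * \<rho>) / (1 + exp (\<kappa> * \<rho>))^2)"
        unfolding d2 s_def[symmetric]
        using sp by (simp add: field_simps power2_eq_square)
    qed
  qed
  show "((\<lambda>\<rho>. deriv (deriv (deriv u)) \<rho> / deriv (deriv u) \<rho>) \<longlongrightarrow> \<kappa>) F"
  proof (rule Lim_transform_eventually)
    show "((\<lambda>\<rho>. \<kappa> * (deriv f (exp (\<kappa> * \<rho>)) + 3 * exp (\<kappa> * \<rho>) * deriv (deriv f) (exp (\<kappa> * \<rho>))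
          + exp (\<kappa> * \<rho>)^2 * deriv (deriv (deriv f)) (exp (\<kappa> * \<rho>)))
          / (deriv f (exp (\<kappa> * \<rho>)) + exp (\<kappa> * \<rho>) * deriv (deriv f) (exp (\<kappa> * \<rho>)))) \<longlongrightarrow> \<kappa>) F"
    proof -
      have "isCont (\<lambda>x. \<kappa> * (deriv f x + 3 * x * deriv (deriv f) x + x^2 * deriv (deriv (deriv f)) x)
          / (deriv f x + x * deriv (deriv f) x)) 0"
        using DERIV_isCont[OF D(2)] DERIV_isCont[OF D(3)] DERIV_isCont[OF D(4)] f1pos
        by (intro continuous_intros) auto
      from isCont_tendsto_compose[OF this lim] show ?thesis using f1pos by simp
    qed
    show "\<forall>\<^sub>F \<rho> in F. \<kappa> * (deriv f (exp (\<kappa> * \<rho>)) + 3 * exp (\<kappa> * \<rho>) * deriv (deriv f) (exp (\<kappa> * \<rho>))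
          + exp (\<kappa> * \<rho>)^2 * deriv (deriv (deriv f)) (exp (\<kappa> * \<rho>)))
          / (deriv f (exp (\<kappa> * \<rho>)) + exp (\<kappa> * \<rho>) * deriv (deriv f) (exp (\<kappa> * \<rho>)))
          = deriv (deriv (deriv u)) \<rho> / deriv (deriv u) \<rho>"
      using ev
    proof (rule eventually_mono)
      fix \<rho> assume r: "exp (\<kappa> * \<rho>) < \<delta>"
      define s where "s = exp (\<kappa> * \<rho>)"
      have sp: "s > 0" by (simp add: s_def)
      show "\<kappa> * (deriv f (exp (\<kappa> * \<rho>)) + 3 * exp (\<kappa> * \<rho>) * deriv (deriv f) (exp (\<kappa> * \<rho>))
          + exp (\<kappa> * \<rho>)^2 * deriv (deriv (deriv f)) (exp (\<kappa> * \<rho>)))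
          / (deriv f (exp (\<kappa> * \<rho>)) + exp (\<kappa> * \<rho>) * deriv (deriv f) (exp (\<kappa> * \<rho>)))
          = deriv (deriv (deriv u)) \<rho> / deriv (deriv u) \<rho>"
      proof -
        define A where "A = deriv f s + 3 * s * deriv (deriv f) s + s^2 * deriv (deriv (deriv f)) s"
        define B where "B = deriv f s + s * deriv (deriv f) s"
        have d2: "deriv (deriv u) \<rho> = (\<kappa>^2 * s) * B"
          using calabi_end_derivs(2)[OF sf eq r] by (simp add: s_def B_def algebra_simps power2_eq_square)
        have d3: "deriv (deriv (deriv u)) \<rho> = (\<kappa>^2 * s) * (\<kappa> * A)"
          using calabi_end_derivs(3)[OF sf eq r] by (simp add: s_def A_def algebra_simps power2_eq_square power3_eq_cube)
        have "deriv (deriv (deriv u)) \<rho> / deriv (deriv u) \<rho> = \<kappa> * A / B"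
          unfolding d2 d3 using sp kap by (subst mult_divide_mult_cancel_left) auto
        then show ?thesis by (simp add: A_def B_def s_def)
      qed
    qed
  qed
  show "((\<lambda>\<rho>. exp (N * \<rho> - u \<rho> / T) / (exp (\<kappa> * \<rho>) / (1 + exp (\<kappa> * \<rho>))^2)) \<longlongrightarrow> exp (- f 0 / T)) F"
  proof (rule Lim_transform_eventually)
    show "((\<lambda>\<rho>. (1 + exp (\<kappa> * \<rho>))^2 * exp (- f (exp (\<kappa> * \<rho>)) / T)) \<longlongrightarrow> exp (- f 0 / T)) F"
    proof -
      have "isCont (\<lambda>x. (1 + x)^2 * exp (- f x / T)) 0"
        using DERIV_isCont[OF D(1)] NT(2) by (intro continuous_intros) auto
      from isCont_tendsto_compose[OF this lim] show ?thesis by simp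
    qed
    show "\<forall>\<^sub>F \<rho> in F. (1 + exp (\<kappa> * \<rho>))^2 * exp (- f (exp (\<kappa> * \<rho>)) / T)
        = exp (N * \<rho> - u \<rho> / T) / (exp (\<kappa> * \<rho>) / (1 + exp (\<kappa> * \<rho>))^2)"
      using ev
    proof (rule eventually_mono)
      fix \<rho> assume r: "exp (\<kappa> * \<rho>) < \<delta>"
      have "N * \<rho> - u \<rho> / T = \<kappa> * \<rho> + (- f (exp (\<kappa> * \<rho>)) / T)"
      proof -
        have "N * \<rho> - u \<rho> / T = (N - a / T) * \<rho> + (- f (exp (\<kappa> * \<rho>)) / T)"
          using eq[OF r] by (simp add: algebra_simps add_divide_distrib diff_divide_distrib)
        then show ?thesis using NT(1) by simp
      qed
      then have "exp (N * \<rho> - u \<rho> / T) = exp (\<kappa> * \<rho>) * exp (- f (exp (\<kappa> * \<rho>)) / T)"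
        by (simp add: exp_add[symmetric])
      then show "(1 + exp (\<kappa> * \<rho>))^2 * exp (- f (exp (\<kappa> * \<rho>)) / T)
        = exp (N * \<rho> - u \<rho> / T) / (exp (\<kappa> * \<rho>) / (1 + exp (\<kappa> * \<rho>))^2)"
        by (simp add: field_simps add_pos_pos)
    qed
  qed
qed

theorem mainTheorem10:
  fixes n k :: nat and a0 b0 T :: real and u :: "real \<Rightarrow> real \<Rightarrow> real"
  assumes k_ge: "1 \<le> k" and k_le: "k \<le> n - 1"
    and a0_pos: "0 < a0" and a0_b0: "a0 < b0"
    and caseII: "a0 * (real n + real k) = b0 * (real n - real k)"
    and T_def: "T = a0 / (real n - real k)"
    and kaehler: "\<And>t. t \<in> {0..<T} \<Longrightarrow>
        calabi_kaehler_potential k (a0 + (real k - real n) * t) (b0 - (real k + real n) * t) (u t)"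
    and normalized: "\<And>t. t \<in> {0..<T} \<Longrightarrow> u t 0 = 0"
    and lim_bot: "\<And>t. t \<in> {0..<T} \<Longrightarrow>
        (deriv (u t) \<longlongrightarrow> a0 + (real k - real n) * t) at_bot"
    and lim_top: "\<And>t. t \<in> {0..<T} \<Longrightarrow>
        (deriv (u t) \<longlongrightarrow> b0 - (real k + real n) * t) at_top"
    and equation: "\<And>t. t \<in> {0..<T} \<Longrightarrow> \<exists>c. \<forall>\<rho>.
        u t \<rho> = u 0 \<rho> - t * (real n * \<rho> - (real n - 1) * ln (deriv (u t) \<rho>)
                                   - ln (deriv (deriv (u t)) \<rho>)) + c"
  shows "(\<forall>t\<in>{0..<T}. \<forall>\<rho>. (real n - real k) * (T - t) < deriv (u t) \<rho> \<and>
                              deriv (u t) \<rho> < (real n + real k) * (T - t))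
       \<and> (\<forall>\<rho>. ((\<lambda>t. u t \<rho>) \<longlongrightarrow> 0) (at_left T))
       \<and> (\<exists>C>0. \<forall>t\<in>{0..<T}. \<forall>\<rho>.
            inverse C * (exp (real k * \<rho>) / (1 + exp (real k * \<rho>))\<^sup>2) * (T - t)
               < deriv (deriv (u t)) \<rho> \<and>
            deriv (deriv (u t)) \<rho>
               \<le> C * (exp (real k * \<rho>) / (1 + exp (real k * \<rho>))\<^sup>2) * (T - t) \<and>
            \<bar>deriv (deriv (deriv (u t))) \<rho>\<bar> / deriv (deriv (u t)) \<rho> \<le> C)"
proof -
  define I where "I = {0..<T}"
  define gg where "gg = (\<lambda>\<rho>::real. exp (real k * \<rho>) / (1 + exp (real k * \<rho>))\<^sup>2)"
  have kk1: "real k \<ge> 1" using k_ge by simp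
  have nk1: "real n - real k \<ge> 1"
  proof -
    have "k + 1 \<le> n" using k_le k_ge by arith
    then have "real k + 1 \<le> real n" by (metis of_nat_add of_nat_le_iff of_nat_1)
    then show ?thesis by simp
  qed
  have Tp: "T > 0" using T_def a0_pos nk1 by simp
  have a0eq: "a0 = (real n - real k) * T" using T_def nk1 by simp
  have b0eq: "b0 = (real n + real k) * T"
  proof -
    have "b0 * (real n - real k) = ((real n + real k) * T) * (real n - real k)"
      using caseII a0eq by (simp add: algebra_simps)
    then show ?thesis using nk1 by simp
  qed
  have aeq: "a0 + (real k - real n) * t = (real n - real k) * (T - t)" for t
    using a0eq by (simp add: algebra_simps)
  have beq: "b0 - (real k + real n) * t = (real n + real k) * (T - t)" for t
    using b0eq by (simp add: algebra_simps)
  have cal: "calabi_kaehler_potential k ((real n - real k) * (T - t)) ((real n + real k) * (T - t)) (u t)"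
    if "t \<in> I" for t using kaehler[of t] that aeq beq by (simp add: I_def)
  have sm: "smooth_real_on (u t) UNIV" if "t \<in> I" for t
    using cal[OF that] unfolding calabi_kaehler_potential_def by blast
  have pos1: "deriv (u t) x > 0" and pos2: "deriv (deriv (u t)) x > 0" if "t \<in> I" for t x
    using cal[OF that] unfolding calabi_kaehler_potential_def by blast+
  note D = smooth_D[OF sm UNIV_I]
  have lb: "(deriv (u t) \<longlongrightarrow> (real n - real k) * (T - t)) at_bot" if "t \<in> I" for t
    using lim_bot[of t] that aeq by (simp add: I_def)
  have lt: "(deriv (u t) \<longlongrightarrow> (real n + real k) * (T - t)) at_top" if "t \<in> I" for t
    using lim_top[of t] that beq by (simp add: I_def)
  have I0: "0 \<in> I" using Tp by (simp add: I_def)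
  have part1: "(real n - real k) * (T - t) < deriv (u t) \<rho> \<and> deriv (u t) \<rho> < (real n + real k) * (T - t)"
    if "t \<in> I" for t \<rho>
    using strict_between[OF D(2)[OF that] pos2[OF that] lb[OF that] lt[OF that]] .
  have part2: "((\<lambda>t. u t \<rho>) \<longlongrightarrow> 0) (at_left T)" for \<rho>
  proof (rule Lim_null_comparison)
    show "\<forall>\<^sub>F t in at_left T. norm (u t \<rho>) \<le> (real n + real k) * (T - t) * \<bar>\<rho>\<bar>"
      using eventually_at_left_real[OF Tp]
    proof (rule eventually_mono)
      fix t assume "t \<in> {0<..<T}"
      then have tI: "t \<in> I" by (simp add: I_def)
      have "\<bar>u t \<rho>\<bar> \<le> (real n + real k) * (T - t) * \<bar>\<rho>\<bar>"
      proof (rule mvt_bound[OF D(1)[OF tI]])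
        show "\<bar>deriv (u t) x\<bar> \<le> (real n + real k) * (T - t)" for x
          using part1[OF tI, of x] pos1[OF tI, of x] by simp
        show "u t 0 = 0" using normalized tI by (simp add: I_def)
      qed
      then show "norm (u t \<rho>) \<le> (real n + real k) * (T - t) * \<bar>\<rho>\<bar>" by simp
    qed
    have "((\<lambda>t. (real n + real k) * (T - t) * \<bar>\<rho>\<bar>) \<longlongrightarrow> (real n + real k) * (T - T) * \<bar>\<rho>\<bar>) (at_left T)"
      by (intro tendsto_intros)
    then show "((\<lambda>t. (real n + real k) * (T - t) * \<bar>\<rho>\<bar>) \<longlongrightarrow> 0) (at_left T)" by simp
  qed
  have cal0: "calabi_kaehler_potential k ((real n - real k) * T) ((real n + real k) * T) (u 0)"
    using cal[OF I0] by simp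
  obtain f \<delta>1 where f: "\<delta>1 > 0" "smooth_real_on f {-\<delta>1<..<\<delta>1}" "deriv f 0 > 0"
      "\<And>\<rho>. exp (real k * \<rho>) < \<delta>1 \<Longrightarrow> u 0 \<rho> = ((real n - real k) * T) * \<rho> + f (exp (real k * \<rho>))"
    using cal0 unfolding calabi_kaehler_potential_def by blast
  obtain g \<delta>2 where g: "\<delta>2 > 0" "smooth_real_on g {-\<delta>2<..<\<delta>2}" "deriv g 0 > 0"
      "\<And>\<rho>. exp (- real k * \<rho>) < \<delta>2 \<Longrightarrow> u 0 \<rho> = ((real n + real k) * T) * \<rho> + g (exp (- real k * \<rho>))"
    using cal0 unfolding calabi_kaehler_potential_def by blast
  have kne: "real k \<noteq> 0" "- real k \<noteq> 0" using kk1 by auto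
  have NT1: "real n - (real n - real k) * T / T = real k" using Tp by simp
  have NT2: "real n - (real n + real k) * T / T = - real k" using Tp by simp
  have Tne: "T \<noteq> 0" using Tp by simp
  have lim_e1: "((\<lambda>\<rho>. exp (real k * \<rho>)) \<longlongrightarrow> 0) at_bot" using exp_lim_bot kk1 by simp
  have lim_e2: "((\<lambda>\<rho>. exp (- real k * \<rho>)) \<longlongrightarrow> 0) at_top" using exp_lim_top kk1 by simp
  note LB = calabi_end_lims[OF f(2,1,3) kne(1) f(4) lim_e1 NT1 Tne]
  note LT = calabi_end_lims[OF g(2,1,3) kne(2) g(4) lim_e2 NT2 Tne]
  have ggs: "exp (- real k * \<rho>) / (1 + exp (- real k * \<rho>))\<^sup>2 = gg \<rho>" for \<rho>
    unfolding gg_def by (rule gg_sym)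
  have ggp: "gg \<rho> > 0" "gg \<rho> \<le> 1" for \<rho> unfolding gg_def by (rule gg_bounds)+
  have ggc: "continuous_on UNIV gg"
  proof -
    have "(1 + exp (real k * \<rho>))\<^sup>2 \<noteq> 0" for \<rho> by (smt (verit) exp_gt_zero zero_less_power)
    then show ?thesis unfolding gg_def by (intro continuous_intros) auto
  qed
  have cont: "continuous_on UNIV h" if "\<And>x. (h has_real_derivative h' x) (at x)" for h h'
    using that by (meson DERIV_isCont continuous_at_imp_continuous_on)
  have c_u0: "continuous_on UNIV (u 0)" by (rule cont[OF D(1)[OF I0]])
  have c_p2: "continuous_on UNIV (deriv (deriv (u 0)))" by (rule cont[OF D(3)[OF I0]])
  have c_p3: "continuous_on UNIV (deriv (deriv (deriv (u 0))))" by (rule cont[OF D(4)[OF I0]])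
  obtain KA where KA: "\<And>\<rho>. \<bar>ln (deriv (deriv (u 0)) \<rho> / gg \<rho>)\<bar> \<le> KA"
  proof -
    have "\<exists>K. \<forall>x. \<bar>ln (deriv (deriv (u 0)) x / gg x)\<bar> \<le> K"
    proof (rule ln_bounded_lims)
      show "continuous_on UNIV (\<lambda>x. deriv (deriv (u 0)) x / gg x)"
        using c_p2 ggc ggp by (intro continuous_intros) (auto simp: less_le)
      show "deriv (deriv (u 0)) x / gg x > 0" for x using pos2[OF I0] ggp by simp
      show "((\<lambda>x. deriv (deriv (u 0)) x / gg x) \<longlongrightarrow> (real k)^2 * deriv f 0) at_bot"
        using LB(1) unfolding gg_def .
      show "(real k)^2 * deriv f 0 > 0" using f(3) kk1 by simp
      show "((\<lambda>x. deriv (deriv (u 0)) x / gg x) \<longlongrightarrow> (- real k)^2 * deriv g 0) at_top"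
        using LT(1) unfolding ggs .
      show "(- real k)^2 * deriv g 0 > 0" using g(3) kk1 by simp
    qed
    then show ?thesis using that by blast
  qed
  obtain KG where KG: "\<And>\<rho>. \<bar>ln (exp (real n * \<rho> - u 0 \<rho> / T) / gg \<rho>)\<bar> \<le> KG"
  proof -
    have "\<exists>K. \<forall>x. \<bar>ln (exp (real n * x - u 0 x / T) / gg x)\<bar> \<le> K"
    proof (rule ln_bounded_lims)
      show "continuous_on UNIV (\<lambda>x. exp (real n * x - u 0 x / T) / gg x)"
        using c_u0 ggc ggp Tne by (intro continuous_intros) (auto simp: less_le)
      show "exp (real n * x - u 0 x / T) / gg x > 0" for x using ggp by simp
      show "((\<lambda>x. exp (real n * x - u 0 x / T) / gg x) \<longlongrightarrow> exp (- f 0 / T)) at_bot"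
        using LB(3) unfolding gg_def .
      show "((\<lambda>x. exp (real n * x - u 0 x / T) / gg x) \<longlongrightarrow> exp (- g 0 / T)) at_top"
        using LT(3) unfolding ggs .
    qed auto
    then show ?thesis using that by blast
  qed
  obtain K0 where K0: "\<And>\<rho>. \<bar>deriv (deriv (deriv (u 0))) \<rho> / deriv (deriv (u 0)) \<rho>\<bar> \<le> K0"
  proof -
    have "\<exists>K. \<forall>x. \<bar>deriv (deriv (deriv (u 0))) x / deriv (deriv (u 0)) x\<bar> \<le> K"
    proof (rule bounded_lims)
      show "continuous_on UNIV (\<lambda>x. deriv (deriv (deriv (u 0))) x / deriv (deriv (u 0)) x)"
        using c_p2 c_p3 pos2[OF I0] by (intro continuous_intros) (auto simp: less_le)
      show "((\<lambda>x. deriv (deriv (deriv (u 0))) x / deriv (deriv (u 0)) x) \<longlongrightarrow> real k) at_bot"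
        using LB(2) .
      show "((\<lambda>x. deriv (deriv (deriv (u 0))) x / deriv (deriv (u 0)) x) \<longlongrightarrow> - real k) at_top"
        using LT(2) .
    qed
    then show ?thesis using that by blast
  qed
  have KAp: "KA \<ge> 0" using KA[of 0] by linarith
  have KGp: "KG \<ge> 0" using KG[of 0] by linarith
  have K0p: "K0 \<ge> 0" using K0[of 0] by linarith
  have ln_h1: "ln (deriv (deriv (u 0)) \<rho> / gg \<rho>) = ln (deriv (deriv (u 0)) \<rho>) - ln (gg \<rho>)" for \<rho>
    using pos2[OF I0, of \<rho>] ggp(1)[of \<rho>] by (simp add: ln_div)
  have ln_h2: "ln (exp (real n * \<rho> - u 0 \<rho> / T) / gg \<rho>) = (real n * \<rho> - u 0 \<rho> / T) - ln (gg \<rho>)" for \<rho>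
    using ggp(1)[of \<rho>] by (simp add: ln_div)
  have KL: "\<bar>ln (deriv (deriv (u 0)) x) + u 0 x / T - real n * x\<bar> \<le> KA + KG" for x
    using KA[of x] KG[of x] unfolding ln_h1 ln_h2 by linarith
  define \<Lambda> where "\<Lambda> = KA + 2 * KG + \<bar>ln T\<bar> + (real n - 1) * (ln (real n + real k) - ln (real n - real k))"
  have lnd: "ln (real n - real k) \<le> ln (real n + real k)" using nk1 by simp
  have n1: "real n - 1 \<ge> 0" using nk1 by linarith
  have extra: "(real n - 1) * (ln (real n + real k) - ln (real n - real k)) \<ge> 0"
    using n1 lnd by simp
  have claimA: "\<bar>ln (deriv (deriv (u t)) \<rho> / ((T - t) * gg \<rho>))\<bar> \<le> \<Lambda>" if tI: "t \<in> I" for t \<rho>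
  proof (cases "t = 0")
    case True
    have "ln (deriv (deriv (u 0)) \<rho> / ((T - 0) * gg \<rho>)) = ln (deriv (deriv (u 0)) \<rho> / gg \<rho>) - ln T"
      using pos2[OF I0, of \<rho>] ggp(1)[of \<rho>] Tp by (simp add: ln_div ln_mult)
    then show ?thesis using True KA[of \<rho>] KGp extra unfolding \<Lambda>_def by simp
  next
    case False
    then have tp: "t > 0" and tT: "t < T" using tI by (auto simp: I_def)
    obtain c where c: "\<And>\<rho>. u t \<rho> = u 0 \<rho> - t * (real n * \<rho> - (real n - 1) * ln (deriv (u t) \<rho>)
                                   - ln (deriv (deriv (u t)) \<rho>)) + c"
      using equation[of t] tI by (auto simp: I_def)
    have eqn: "t * (ln (deriv (deriv (u t)) x) + (real n - 1) * ln (deriv (u t) x))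
        = u t x - u 0 x + t * real n * x - c" for x
      using c[of x] by (simp add: algebra_simps)
    have E: "\<bar>ln (deriv (deriv (u t)) \<rho>) - ln (T - t) - (real n * \<rho> - u 0 \<rho> / T)\<bar>
        \<le> (KA + KG) + \<bar>ln T\<bar> + (real n - 1) * (ln (real n + real k) - ln (real n - real k))"
    proof (rule est_A[where U="u t" and V="u 0" and t=t and s="T - t"])
      show "T = t + (T - t)" by simp
      show "(u t has_real_derivative deriv (u t) x) (at x)" for x using D(1)[OF tI] .
      show "(deriv (u t) has_real_derivative deriv (deriv (u t)) x) (at x)" for x using D(2)[OF tI] .
      show "(u 0 has_real_derivative deriv (u 0) x) (at x)" for x using D(1)[OF I0] .
      show "(deriv (u 0) has_real_derivative deriv (deriv (u 0)) x) (at x)" for x using D(2)[OF I0] .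
      show "(real n - real k) * (T - t) < deriv (u t) x \<and> deriv (u t) x < (real n + real k) * (T - t)" for x
        using part1[OF tI] .
      show "deriv (deriv (u t)) x > 0" for x using pos2[OF tI] .
      show "deriv (deriv (u 0)) x > 0" for x using pos2[OF I0] .
      show "(deriv (u t) \<longlongrightarrow> (real n - real k) * (T - t)) at_bot" using lb[OF tI] .
      show "(deriv (u 0) \<longlongrightarrow> (real n - real k) * T) at_bot" using lb[OF I0] by simp
      show "(deriv (u t) \<longlongrightarrow> (real n + real k) * (T - t)) at_top" using lt[OF tI] .
      show "(deriv (u 0) \<longlongrightarrow> (real n + real k) * T) at_top" using lt[OF I0] by simp
    qed (use tp tT nk1 n1 eqn KL in auto)
    have "ln (deriv (deriv (u t)) \<rho> / ((T - t) * gg \<rho>))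
        = (ln (deriv (deriv (u t)) \<rho>) - ln (T - t) - (real n * \<rho> - u 0 \<rho> / T))
          + ln (exp (real n * \<rho> - u 0 \<rho> / T) / gg \<rho>)"
      unfolding ln_h2 using pos2[OF tI, of \<rho>] ggp(1)[of \<rho>] tT by (simp add: ln_div ln_mult)
    then show ?thesis using E KG[of \<rho>] unfolding \<Lambda>_def by linarith
  qed
  have P2up: "deriv (deriv (u t)) \<rho> \<le> exp \<Lambda> * ((T - t) * gg \<rho>)"
    and P2lo: "exp (- \<Lambda>) * ((T - t) * gg \<rho>) \<le> deriv (deriv (u t)) \<rho>" if tI: "t \<in> I" for t \<rho>
  proof -
    have sg: "(T - t) * gg \<rho> > 0" using tI ggp by (simp add: I_def)
    define X where "X = deriv (deriv (u t)) \<rho> / ((T - t) * gg \<rho>)"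
    have Xp: "X > 0" unfolding X_def using pos2[OF tI] sg by simp
    have "\<bar>ln X\<bar> \<le> \<Lambda>" unfolding X_def by (rule claimA[OF tI])
    then have "ln X \<le> \<Lambda>" "- \<Lambda> \<le> ln X" by auto
    then have "X \<le> exp \<Lambda>" "exp (- \<Lambda>) \<le> X" using Xp
      by (metis exp_le_cancel_iff exp_ln)+
    then show "deriv (deriv (u t)) \<rho> \<le> exp \<Lambda> * ((T - t) * gg \<rho>)"
      "exp (- \<Lambda>) * ((T - t) * gg \<rho>) \<le> deriv (deriv (u t)) \<rho>"
      unfolding X_def using sg by (auto simp: divide_le_eq le_divide_eq)
  qed
  define K1 where "K1 = exp \<Lambda> / (real n - real k)"
  define C3 where "C3 = K0 + 2 * (real n - 1) * K1 + 3 * real n"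
  have K1p: "K1 \<ge> 0" unfolding K1_def using nk1 by simp
  have claimB: "\<bar>deriv (deriv (deriv (u t))) \<rho> / deriv (deriv (u t)) \<rho>\<bar> \<le> C3" if tI: "t \<in> I" for t \<rho>
  proof (cases "t = 0")
    case True
    have "0 \<le> 2 * (real n - 1) * K1" using K1p n1 by simp
    moreover have "0 \<le> 3 * real n" by simp
    ultimately show ?thesis using K0[of \<rho>] unfolding C3_def True by linarith
  next
    case False
    then have tp: "t > 0" and tT: "t < T" using tI by (auto simp: I_def)
    obtain c where c: "\<And>\<rho>. u t \<rho> = u 0 \<rho> - t * (real n * \<rho> - (real n - 1) * ln (deriv (u t) \<rho>)
                                   - ln (deriv (deriv (u t)) \<rho>)) + c"
      using equation[of t] tI by (auto simp: I_def)
    have eqd: "deriv (u t) x - deriv (u 0) x = t * (- real n + (real n - 1) * (deriv (deriv (u t)) x / deriv (u t) x)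
          + deriv (deriv (deriv (u t))) x / deriv (deriv (u t)) x)" for x
    proof -
      define R where "R = deriv (u 0) x - t * (real n - (real n - 1) * (deriv (deriv (u t)) x / deriv (u t) x)
          - deriv (deriv (deriv (u t))) x / deriv (deriv (u t)) x)"
      have "((\<lambda>\<rho>. u 0 \<rho> - t * (real n * \<rho> - (real n - 1) * ln (deriv (u t) \<rho>)
                                   - ln (deriv (deriv (u t)) \<rho>)) + c) has_real_derivative R) (at x)"
        unfolding R_def using D(1)[OF I0, of x] D(2)[OF tI, of x] D(3)[OF tI, of x] pos1[OF tI, of x] pos2[OF tI, of x]
        by (auto intro!: derivative_eq_intros simp: field_simps)
      then have "(u t has_real_derivative R) (at x)"
        by (rule has_field_derivative_transform_within_open[OF _ open_UNIV UNIV_I]) (use c in auto)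
      then have "deriv (u t) x = R" using D(1)[OF tI, of x] DERIV_unique by blast
      then show ?thesis unfolding R_def by (simp add: algebra_simps)
    qed
    show ?thesis
    proof -
      have "\<bar>deriv (deriv (deriv (u t))) \<rho> / deriv (deriv (u t)) \<rho>\<bar> \<le> K0 + 2 * (real n - 1) * K1 + 3 * real n"
      proof (rule est_B[where Pa="deriv (u t)" and Qa="deriv (u 0)" and Pb="deriv (deriv (u t))" and Pc="deriv (deriv (deriv (u t)))" and Qb="deriv (deriv (u 0))" and Qc="deriv (deriv (deriv (u 0)))" and t=t
            and la="(real n - real k) * (T - t) - (real n - real k) * T"
            and lb="(real n + real k) * (T - t) - (real n + real k) * T"])
        show "(deriv (u t) has_real_derivative deriv (deriv (u t)) x) (at x)" for x using D(2)[OF tI] .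
        show "(deriv (deriv (u t)) has_real_derivative deriv (deriv (deriv (u t))) x) (at x)" for x using D(3)[OF tI] .
        show "(deriv (u 0) has_real_derivative deriv (deriv (u 0)) x) (at x)" for x using D(2)[OF I0] .
        show "(deriv (deriv (u 0)) has_real_derivative deriv (deriv (deriv (u 0))) x) (at x)" for x using D(3)[OF I0] .
        show "deriv (deriv (u t)) x / deriv (u t) x \<le> K1" for x
        proof -
          have a: "deriv (deriv (u t)) x \<le> exp \<Lambda> * (T - t)"
          proof -
            have "(T - t) * gg x \<le> (T - t)" using ggp(2)[of x] tT by (simp add: mult_left_le)
            then have "exp \<Lambda> * ((T - t) * gg x) \<le> exp \<Lambda> * (T - t)" by (rule mult_left_mono) simp
            then show ?thesis using P2up[OF tI, of x] by linarith
          qed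
          have b: "(real n - real k) * (T - t) \<le> deriv (u t) x" using part1[OF tI, of x] by simp
          have "deriv (deriv (u t)) x / deriv (u t) x \<le> exp \<Lambda> * (T - t) / ((real n - real k) * (T - t))"
            using a b pos1[OF tI, of x] pos2[OF tI, of x] tT nk1
            by (intro frac_le) auto
          also have "\<dots> = K1" unfolding K1_def using tT by simp
          finally show ?thesis .
        qed
        show "((\<lambda>x. deriv (u t) x - deriv (u 0) x) \<longlongrightarrow> (real n - real k) * (T - t) - (real n - real k) * T) at_bot"
          using lb[OF tI] lb[OF I0] by (intro tendsto_intros) auto
        show "((\<lambda>x. deriv (u t) x - deriv (u 0) x) \<longlongrightarrow> (real n + real k) * (T - t) - (real n + real k) * T) at_top"
          using lt[OF tI] lt[OF I0] by (intro tendsto_intros) auto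
        show "\<bar>(real n - real k) * (T - t) - (real n - real k) * T\<bar> \<le> 2 * real n * t"
          using tp nk1 by (simp add: algebra_simps abs_mult)
        show "\<bar>(real n + real k) * (T - t) - (real n + real k) * T\<bar> \<le> 2 * real n * t"
        proof -
          have e: "(real n + real k) * (T - t) - (real n + real k) * T = - ((real n + real k) * t)"
            by (simp add: algebra_simps)
          have y: "(real n + real k) * t \<ge> 0" using tp by simp
          have "(real n + real k) * t \<le> (2 * real n) * t" using tp nk1 by (intro mult_right_mono) auto
          then show ?thesis unfolding e using y by simp
        qed
        show "t > 0" by (rule tp)
        show "deriv (u t) x > 0" for x using pos1[OF tI] .
        show "deriv (deriv (u t)) x > 0" for x using pos2[OF tI] .
        show "deriv (deriv (u 0)) x > 0" for x using pos2[OF I0] .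
        show "deriv (u t) x - deriv (u 0) x = t * (- real n + (real n - 1) * (deriv (deriv (u t)) x / deriv (u t) x)
          + deriv (deriv (deriv (u t))) x / deriv (deriv (u t)) x)" for x by (rule eqd)
        show "\<bar>deriv (deriv (deriv (u 0))) x / deriv (deriv (u 0)) x\<bar> \<le> K0" for x by (rule K0)
        show "real n - 1 \<ge> 0" by (rule n1)
        show "real n \<ge> 0" by simp
      qed
      then show ?thesis unfolding C3_def .
    qed
  qed
  have gge: "gg \<rho> = exp (real k * \<rho>) / (1 + exp (real k * \<rho>))\<^sup>2" for \<rho> by (simp add: gg_def)
  define C where "C = max (exp \<Lambda> + 1) C3"
  have "exp \<Lambda> + 1 \<le> C" unfolding C_def by simp
  then have Cp: "C > 0" using exp_gt_zero[of \<Lambda>] by linarith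
  have invC: "inverse C < exp (- \<Lambda>)"
  proof -
    have "inverse C \<le> inverse (exp \<Lambda> + 1)" unfolding C_def
      by (rule le_imp_inverse_le) (auto simp: add_pos_pos)
    also have "\<dots> < inverse (exp \<Lambda>)" by (rule less_imp_inverse_less) auto
    also have "\<dots> = exp (- \<Lambda>)" by (simp add: exp_minus)
    finally show ?thesis .
  qed
  have part3: "inverse C * gg \<rho> * (T - t) < deriv (deriv (u t)) \<rho> \<and>
            deriv (deriv (u t)) \<rho> \<le> C * gg \<rho> * (T - t) \<and>
            \<bar>deriv (deriv (deriv (u t))) \<rho>\<bar> / deriv (deriv (u t)) \<rho> \<le> C" if tI: "t \<in> I" for t \<rho>
  proof (intro conjI)
    have sg: "(T - t) * gg \<rho> > 0" using tI ggp by (simp add: I_def)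
    have "inverse C * ((T - t) * gg \<rho>) < exp (- \<Lambda>) * ((T - t) * gg \<rho>)"
      using mult_strict_right_mono[OF invC sg] .
    then show "inverse C * gg \<rho> * (T - t) < deriv (deriv (u t)) \<rho>"
      using P2lo[OF tI, of \<rho>] by (simp add: algebra_simps)
    have "exp \<Lambda> * ((T - t) * gg \<rho>) \<le> C * ((T - t) * gg \<rho>)"
      using sg unfolding C_def by (intro mult_right_mono) auto
    then show "deriv (deriv (u t)) \<rho> \<le> C * gg \<rho> * (T - t)"
      using P2up[OF tI, of \<rho>] by (simp add: algebra_simps)
    have "\<bar>deriv (deriv (deriv (u t))) \<rho>\<bar> / deriv (deriv (u t)) \<rho>
        = \<bar>deriv (deriv (deriv (u t))) \<rho> / deriv (deriv (u t)) \<rho>\<bar>"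
      using pos2[OF tI, of \<rho>] by simp
    also have "\<dots> \<le> C3" by (rule claimB[OF tI])
    also have "\<dots> \<le> C" unfolding C_def by simp
    finally show "\<bar>deriv (deriv (deriv (u t))) \<rho>\<bar> / deriv (deriv (u t)) \<rho> \<le> C" .
  qed
  show ?thesis
  proof (intro conjI)
    show "\<forall>t\<in>{0..<T}. \<forall>\<rho>. (real n - real k) * (T - t) < deriv (u t) \<rho> \<and>
                              deriv (u t) \<rho> < (real n + real k) * (T - t)"
      using part1 unfolding I_def by blast
    show "\<forall>\<rho>. ((\<lambda>t. u t \<rho>) \<longlongrightarrow> 0) (at_left T)" using part2 by blast
    show "\<exists>C>0. \<forall>t\<in>{0..<T}. \<forall>\<rho>.
            inverse C * (exp (real k * \<rho>) / (1 + exp (real k * \<rho>))\<^sup>2) * (T - t)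
               < deriv (deriv (u t)) \<rho> \<and>
            deriv (deriv (u t)) \<rho>
               \<le> C * (exp (real k * \<rho>) / (1 + exp (real k * \<rho>))\<^sup>2) * (T - t) \<and>
            \<bar>deriv (deriv (deriv (u t))) \<rho>\<bar> / deriv (deriv (u t)) \<rho> \<le> C"
      using Cp part3 unfolding I_def gge by blast
  qed
qed

end
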